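(* Let $P=MN_P$ be a standard parabolic subgroup, $\pi\in\Pi_{\mathrm{disc}}(M)$, $R$ a standard parabolic subgroup and $w\in{}_RW_P$. Let $Q$ be standard with $P_0\subset Q\subset R$ and $w'\in{}_QW^R_{R_w}\,w$ with $P_\pi\subset P_{w'}$. (1) For every $\varpi^\vee\in\hat\Delta_Q^{R,\vee}$, $\langle w'\nu^w_{w'},\varpi^\vee\rangle\le0$, with equality if and only if $\varpi^\vee\in w'\mathfrak a^G_{P_w}$. (2) The following are equivalent: (a) $P_w=P_{w'}$; (b) $(w'\nu^w_{w'})^R_Q=0$; (c) $w'\in W^R(R_w;Q)\,w$. (3) There exists $c_1>0$ such that for every $T\in\mathfrak a_0$ with $\langle\alpha,T\rangle\ge0$ for all $\alpha\in\Delta_0$, every standard $P_0\subset Q\subset R$ and every $w'\in{}_QW^R_{R_w}w\setminus W^R(R_w;Q)w$ with $P_\pi\subset P_{w'}$, one has $\langle(w'\nu^w_{w'})^R_Q,T\rangle\le-c_1d(T)$.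
   Context: $E/F$ is a quadratic extension of number fields, $G=\mathrm{Res}_{E/F}\mathrm{GL}_n$, $P_0$ the upper triangular Borel, $W\cong\mathfrak S_n$, $\mathfrak a_0\cong\mathbb R^n$ with standard inner product; $\Delta_0$ the simple roots, $d(T)=\min_{\alpha\in\Delta_0}\langle\alpha,T\rangle$. For standard $Q\subset R$: $\mathfrak a_Q^R=\mathfrak a_Q\cap\mathfrak a_0^R$, $\Delta_Q^R$ simple roots of $A_Q$ in $M_R\cap N_Q$, $\hat\Delta_Q^{R,\vee}$ the dual basis of $\mathfrak a_Q^R$; $\mu\mapsto\mu^R_Q$ is the orthogonal projection $\mathfrak a_0^*\to\mathfrak a_Q^{R,*}$. For standard $S,Q$: ${}_QW_S$ is the set of $w\in W$ with $M_S\cap w^{-1}P_0w=M_S\cap P_0$, $M_Q\cap wP_0w^{-1}=M_Q\cap P_0$, $S_w=(M_S\cap w^{-1}Qw)N_S$, $Q_w=(M_Q\cap wSw^{-1})N_Q$; superscript $R$ denotes the analogous objects for $M_R$ (Weyl group $W^R$); $W^R(S;Q)$ is the set of $w\in{}_QW^R_S$ with $M_S\subset w^{-1}M_Qw$. Here $R_w=(M_R\cap wPw^{-1})N_R$; for $w'$ as in the claim, $w'\in{}_QW_P$ and $P_{w'}\subset P_w\subset P$ (with $P_{w'}=(M\cap w'^{-1}Qw')N_P$). $\Pi_{\mathrm{disc}}(M)$: discrete automorphic representations with central character trivial on $A_M^\infty$; writing $M=\prod G_{n_i}$, $\pi=\boxtimes\pi_i$, Moeglin–Waldspurger gives $n_i=r_id_i$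 with $\pi_i$ the residual representation attached to $\sigma_i^{\otimes d_i}$, $\sigma_i$ cuspidal on $\mathrm{GL}_{r_i}$ over $E$; $P_\pi\subset P$ is the standard parabolic with $P_\pi\cap M=\prod P_{\pi_i}$, $P_{\pi_i}$ with Levi $\mathrm{GL}_{r_i}^{d_i}$. For $P_\pi\subset S\subset S'\subset P$, with $S\cap M=\prod S_i$, $S'\cap M=\prod S'_i$, $\nu_S^{S'}=(-\rho_{S_i}^{S'_i}/r_i)_i$. Then $\nu^w_{w'}=\nu^{P_w}_{P_{w'}}$. *)

theory Defs
  imports Complex_Main "HOL-Combinatorics.Permutations"
begin

text \<open>Combinatorial model of G = Res_{E/F} GL_n.  Coordinates of a_0 = R^n are
indexed by 0..n-1; vectors are functions nat => real vanishing outside {..<n}.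
The simple root alpha_i = e_i - e_(i+1), i < n - 1.  A standard parabolic is
encoded by the set of simple roots of its Levi (P_0 is the empty set,
G is the full set {..<n-1}).  Weyl group elements are permutations of {..<n};
w acts on roots by e_i |-> e_(w i).\<close>

definition stdpar :: "nat \<Rightarrow> nat set \<Rightarrow> bool" where
  "stdpar n J \<longleftrightarrow> J \<subseteq> {..<n-1}"

definition Gpar :: "nat \<Rightarrow> nat set" where
  "Gpar n = {..<n-1}"

text \<open>a and b lie in the same diagonal block of the Levi of J.\<close>
definition sameblock :: "nat set \<Rightarrow> nat \<Rightarrow> nat \<Rightarrow> bool" where
  "sameblock J a b \<longleftrightarrow> (\<forall>i. min a b \<le> i \<and> i < max a b \<longrightarrow> i \<in> J)"

definition blockof :: "nat \<Rightarrow> nat set \<Rightarrow> nat \<Rightarrow> nat set" where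
  "blockof n J a = {b. b < n \<and> sameblock J a b}"

definition Vec :: "nat \<Rightarrow> (nat \<Rightarrow> real) set" where
  "Vec n = {v. \<forall>k\<ge>n. v k = 0}"

definition ip :: "nat \<Rightarrow> (nat \<Rightarrow> real) \<Rightarrow> (nat \<Rightarrow> real) \<Rightarrow> real" where
  "ip n x y = (\<Sum>k<n. x k * y k)"

text \<open>Pairing of the simple root alpha_i with a vector.\<close>
definition sroot :: "nat \<Rightarrow> (nat \<Rightarrow> real) \<Rightarrow> real" where
  "sroot i v = v i - v (Suc i)"

definition act :: "(nat \<Rightarrow> nat) \<Rightarrow> (nat \<Rightarrow> real) \<Rightarrow> (nat \<Rightarrow> real)" where
  "act w x = (\<lambda>j. x (inv w j))"

definition Weyl :: "nat \<Rightarrow> (nat \<Rightarrow> nat) set" where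
  "Weyl n = {w. w permutes {..<n}}"

text \<open>W^R: Weyl group of M_R (permutations preserving every R-block).\<close>
definition WeylR :: "nat \<Rightarrow> nat set \<Rightarrow> (nat \<Rightarrow> nat) set" where
  "WeylR n R = {w \<in> Weyl n. \<forall>a<n. sameblock R a (w a)}"

text \<open>_Q W_S : M_S \<inter> w^-1 P_0 w = M_S \<inter> P_0 and M_Q \<inter> w P_0 w^-1 = M_Q \<inter> P_0,
written as equalities of the sets of roots e_a - e_b (a \<noteq> b) involved.\<close>
definition WQS :: "nat \<Rightarrow> nat set \<Rightarrow> nat set \<Rightarrow> (nat \<Rightarrow> nat) set" where
  "WQS n Q S = {w \<in> Weyl n.
     (\<forall>a<n. \<forall>b<n. a \<noteq> b \<longrightarrow> sameblock S a b \<longrightarrow> (w a < w b \<longleftrightarrow> a < b)) \<and>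
     (\<forall>a<n. \<forall>b<n. a \<noteq> b \<longrightarrow> sameblock Q a b \<longrightarrow> (inv w a < inv w b \<longleftrightarrow> a < b))}"

definition WQSR :: "nat \<Rightarrow> nat set \<Rightarrow> nat set \<Rightarrow> nat set \<Rightarrow> (nat \<Rightarrow> nat) set" where
  "WQSR n R Q S = WQS n Q S \<inter> WeylR n R"

text \<open>W^R(S;Q) = { u \<in> _Q W^R_S . M_S \<subseteq> u^-1 M_Q u }.\<close>
definition WRSQ :: "nat \<Rightarrow> nat set \<Rightarrow> nat set \<Rightarrow> nat set \<Rightarrow> (nat \<Rightarrow> nat) set" where
  "WRSQ n R S Q = {u \<in> WQSR n R Q S.
     \<forall>a<n. \<forall>b<n. sameblock S a b \<longrightarrow> sameblock Q (u a) (u b)}"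

text \<open>For w \<in> _Q W_S, S_w = (M_S \<inter> w^-1 Q w) N_S: the standard parabolic whose Levi is
M_S \<inter> w^-1 M_Q w; its Levi simple roots are the alpha_i of M_S with w alpha_i a root of M_Q.
Thus S_w = parw n S Q w, Q_w = parw n Q S (inv w).\<close>
definition parw :: "nat \<Rightarrow> nat set \<Rightarrow> nat set \<Rightarrow> (nat \<Rightarrow> nat) \<Rightarrow> nat set" where
  "parw n S Q w = {i \<in> S. Suc i < n \<and> sameblock Q (w i) (w (Suc i))}"

text \<open>a_Q^R = a_Q \<inter> a_0^R: constant on Q-blocks, sum zero on each R-block.\<close>
definition aQR :: "nat \<Rightarrow> nat set \<Rightarrow> nat set \<Rightarrow> (nat \<Rightarrow> real) set" where
  "aQR n Q R = {v \<in> Vec n. (\<forall>a<n. \<forall>b<n. sameblock Q a b \<longrightarrow> v a = v b) \<and>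
                    (\<forall>a<n. (\<Sum>b\<in>blockof n R a. v b) = 0)}"

text \<open>Orthogonal projection mu |-> mu^R_Q onto a_Q^{R,*} (identified with a_Q^R).\<close>
definition proj :: "nat \<Rightarrow> nat set \<Rightarrow> nat set \<Rightarrow> (nat \<Rightarrow> real) \<Rightarrow> (nat \<Rightarrow> real)" where
  "proj n Q R mu = (THE p. p \<in> aQR n Q R \<and> (\<forall>v\<in>aQR n Q R. ip n (\<lambda>k. mu k - p k) v = 0))"

text \<open>hat Delta_Q^{R,vee}: the basis of a_Q^R dual to Delta_Q^R = {alpha_i : i \<in> R - Q}.\<close>
definition coweights :: "nat \<Rightarrow> nat set \<Rightarrow> nat set \<Rightarrow> (nat \<Rightarrow> real) set" where
  "coweights n Q R = {v \<in> aQR n Q R. \<exists>i\<in>R - Q. \<forall>j\<in>R - Q.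
                         sroot j v = (if j = i then 1 else 0)}"

definition dT :: "nat \<Rightarrow> (nat \<Rightarrow> real) \<Rightarrow> real" where
  "dT n T = Min ((\<lambda>i. sroot i T) ` {..<n-1})"

definition rho :: "nat \<Rightarrow> nat set \<Rightarrow> nat set \<Rightarrow> (nat \<Rightarrow> real)" where
  "rho n S S' = (\<lambda>k. (1/2) * (\<Sum>(a,b)\<in>{(a,b). a < b \<and> b < n \<and> sameblock S' a b \<and> \<not> sameblock S a b}.
       ((if k = a then 1 else 0) - (if k = b then 1 else 0))))"

text \<open>Data of pi \<in> Pi_disc(M) relevant here (Moeglin-Waldspurger): r k is the integer r_i
of the block M_i = GL_{n_i} of M containing coordinate k, and P_pi \<subseteq> P is the standard
parabolic with P_pi \<inter> M_i having Levi GL_{r_i}^{d_i}, i.e. every block of P_pi inside M_i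
has size r_i.\<close>
definition pi_data :: "nat \<Rightarrow> nat set \<Rightarrow> (nat \<Rightarrow> nat) \<Rightarrow> nat set \<Rightarrow> bool" where
  "pi_data n P r Ppi \<longleftrightarrow> Ppi \<subseteq> P \<and> (\<forall>k<n. 0 < r k) \<and>
     (\<forall>a<n. \<forall>b<n. sameblock P a b \<longrightarrow> r a = r b) \<and>
     (\<forall>a<n. card (blockof n Ppi a) = r a)"

definition nu :: "nat \<Rightarrow> (nat \<Rightarrow> nat) \<Rightarrow> nat set \<Rightarrow> nat set \<Rightarrow> (nat \<Rightarrow> real)" where
  "nu n r S S' = (\<lambda>k. - rho n S S' k / real (r k))"

end

theory Submission
  imports Defs
begin


lemma sb_sym: "sameblock J a b = sameblock J b a"
  unfolding sameblock_def by (simp add: min.commute max.commute)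

lemma sb_refl[simp]: "sameblock J a a"
  unfolding sameblock_def by auto

lemma sb_mono: "J \<subseteq> K \<Longrightarrow> sameblock J a b \<Longrightarrow> sameblock K a b"
  unfolding sameblock_def by auto

lemma sb_trans: "sameblock J a b \<Longrightarrow> sameblock J b c \<Longrightarrow> sameblock J a c"
  unfolding sameblock_def
  by (metis le_cases max.absorb1 max.absorb2 min.absorb1 min.absorb2 order.trans
      linorder_not_le)

lemma sb_le: "a \<le> b \<Longrightarrow> sameblock J a b \<longleftrightarrow> (\<forall>i. a \<le> i \<and> i < b \<longrightarrow> i \<in> J)"
  unfolding sameblock_def by auto

lemma sb_consec: "sameblock J i (Suc i) \<longleftrightarrow> i \<in> J"
  unfolding sameblock_def by (force simp: less_Suc_eq_le)

lemma sb_sub: "sameblock J a b \<Longrightarrow> a \<le> x \<Longrightarrow> x \<le> y \<Longrightarrow> y \<le> b \<Longrightarrow> sameblock J x y"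
  unfolding sameblock_def by auto

lemma sb_chain:
  assumes "\<And>i. a \<le> i \<Longrightarrow> i < b \<Longrightarrow> sameblock J (f i) (f (Suc i))" "a \<le> b"
  shows "sameblock J (f a) (f b)"
  using assms
proof (induction b)
  case 0 then show ?case by simp
next
  case (Suc b)
  show ?case
  proof (cases "a = Suc b")
    case True then show ?thesis by simp
  next
    case False
    then have "a \<le> b" using Suc.prems by simp
    then have "sameblock J (f a) (f b)" using Suc by simp
    moreover have "sameblock J (f b) (f (Suc b))" using Suc.prems \<open>a \<le> b\<close> by simp
    ultimately show ?thesis by (rule sb_trans)
  qed
qed

lemma parw_mem: "i \<in> parw n S Q f \<longleftrightarrow> i \<in> S \<and> Suc i < n \<and> sameblock Q (f i) (f (Suc i))"
  unfolding parw_def by auto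

lemma parw_block_le:
  assumes "sameblock (parw n S Q f) a b" "a \<le> b"
  shows "sameblock S a b \<and> sameblock Q (f a) (f b)"
proof
  show "sameblock S a b"
    using assms unfolding sameblock_def parw_def by auto
  show "sameblock Q (f a) (f b)"
    by (rule sb_chain[OF _ assms(2)]) (use assms in \<open>auto simp: sb_le parw_mem\<close>)
qed

lemma parw_block:
  assumes "sameblock (parw n S Q f) a b"
  shows "sameblock S a b \<and> sameblock Q (f a) (f b)"
proof (cases "a \<le> b")
  case True then show ?thesis using parw_block_le assms by blast
next
  case False
  then have "sameblock S b a \<and> sameblock Q (f b) (f a)"
    using parw_block_le[of n S Q f b a] assms by (simp add: sb_sym)
  then show ?thesis by (simp add: sb_sym)
qed

lemma parw_sub: "parw n S Q f \<subseteq> S" unfolding parw_def by auto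

definition avg :: "nat \<Rightarrow> nat set \<Rightarrow> (nat \<Rightarrow> real) \<Rightarrow> nat \<Rightarrow> real" where
  "avg n J x k = (if k < n then (\<Sum>b\<in>blockof n J k. x b) / real (card (blockof n J k)) else 0)"

lemma blockof_finite[simp]: "finite (blockof n J a)"
  unfolding blockof_def by auto

lemma blockof_self: "a < n \<Longrightarrow> a \<in> blockof n J a"
  unfolding blockof_def by auto

lemma blockof_card_pos: "a < n \<Longrightarrow> 0 < card (blockof n J a)"
  using blockof_self card_gt_0_iff by fastforce

lemma blockof_eq: "sameblock J a b \<Longrightarrow> blockof n J a = blockof n J b"
  unfolding blockof_def using sb_trans sb_sym by blast

lemma blockof_filter: "blockof n J a = {b\<in>{..<n}. sameblock J a b}"
  unfolding blockof_def by auto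

lemma avg_expand:
  "k < n \<Longrightarrow> avg n J x k * c = (\<Sum>b<n. if sameblock J k b then x b * c / real (card (blockof n J k)) else 0)"
proof -
  assume "k < n"
  have "avg n J x k * c = (\<Sum>b\<in>blockof n J k. x b * c / real (card (blockof n J k)))"
    using \<open>k < n\<close> unfolding avg_def
    by (simp add: sum_divide_distrib sum_distrib_right)
  also have "\<dots> = (\<Sum>b<n. if sameblock J k b then x b * c / real (card (blockof n J k)) else 0)"
    unfolding blockof_filter by (rule sum.inter_filter) simp
  finally show ?thesis .
qed

lemma ip_avg: "ip n (avg n J x) y = ip n x (avg n J y)"
proof -
  have L: "ip n (avg n J x) y = (\<Sum>k<n. \<Sum>b<n. if sameblock J k b then x b * y k / real (card (blockof n J k)) else 0)"
    unfolding ip_def by (intro sum.cong refl) (simp add: avg_expand)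
  have R: "ip n x (avg n J y) = (\<Sum>b<n. \<Sum>k<n. if sameblock J b k then x b * y k / real (card (blockof n J b)) else 0)"
    unfolding ip_def
  proof (intro sum.cong refl)
    fix b assume "b \<in> {..<n}"
    then have "avg n J y b * x b = (\<Sum>k<n. if sameblock J b k then y k * x b / real (card (blockof n J b)) else 0)"
      by (simp add: avg_expand)
    then show "x b * avg n J y b = (\<Sum>k<n. if sameblock J b k then x b * y k / real (card (blockof n J b)) else 0)"
      by (simp add: mult.commute cong: if_cong)
  qed
  have "(\<Sum>k<n. \<Sum>b<n. if sameblock J k b then x b * y k / real (card (blockof n J k)) else 0)
      = (\<Sum>b<n. \<Sum>k<n. if sameblock J k b then x b * y k / real (card (blockof n J k)) else 0)"
    by (rule sum.swap)
  also have "\<dots> = (\<Sum>b<n. \<Sum>k<n. if sameblock J b k then x b * y k / real (card (blockof n J b)) else 0)"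
    by (intro sum.cong refl) (metis blockof_eq sb_sym)
  finally show ?thesis using L R by simp
qed

definition piop :: "nat \<Rightarrow> nat set \<Rightarrow> nat set \<Rightarrow> (nat \<Rightarrow> real) \<Rightarrow> nat \<Rightarrow> real" where
  "piop n Q R x = (\<lambda>k. avg n Q x k - avg n R x k)"

lemma ip_diff_left: "ip n (\<lambda>k. f k - g k) y = ip n f y - ip n g y"
  unfolding ip_def by (simp add: left_diff_distrib sum_subtractf)

lemma ip_diff_right: "ip n y (\<lambda>k. f k - g k) = ip n y f - ip n y g"
  unfolding ip_def by (simp add: right_diff_distrib sum_subtractf)

lemma ip_add_left: "ip n (\<lambda>k. f k + g k) y = ip n f y + ip n g y"
  unfolding ip_def by (simp add: distrib_right sum.distrib)

lemma ip_sym: "ip n x y = ip n y x"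
  unfolding ip_def by (simp add: mult.commute)


lemma ip_cong: "(\<And>k. k < n \<Longrightarrow> y k = y' k) \<Longrightarrow> ip n x y = ip n x y'"
  unfolding ip_def by simp

lemma ip_ind: "B \<subseteq> {..<n} \<Longrightarrow> ip n f (\<lambda>k. if k \<in> B then 1 else 0) = sum f B"
proof -
  assume B: "B \<subseteq> {..<n}"
  have "ip n f (\<lambda>k. if k \<in> B then 1 else 0) = (\<Sum>k\<in>{..<n}. if k \<in> B then f k else 0)"
    unfolding ip_def by (intro sum.cong) auto
  also have "\<dots> = sum f ({..<n} \<inter> B)" by (simp add: sum.inter_restrict)
  also have "{..<n} \<inter> B = B" using B by auto
  finally show ?thesis .
qed


lemma avg_const:
  assumes "\<forall>a<n. \<forall>b<n. sameblock J a b \<longrightarrow> v a = v b" "k < n"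
  shows "avg n J v k = v k"
proof -
  have "(\<Sum>b\<in>blockof n J k. v b) = (\<Sum>b\<in>blockof n J k. v k)"
  proof (intro sum.cong refl)
    fix b assume "b \<in> blockof n J k"
    then have "b < n" "sameblock J k b" unfolding blockof_def by auto
    then show "v b = v k" using assms by (metis sb_sym)
  qed
  moreover have "card (blockof n J k) \<noteq> 0" using blockof_card_pos[OF assms(2), of J] by linarith
  ultimately show ?thesis using assms(2) unfolding avg_def by simp
qed

lemma avg_zero:
  assumes "\<forall>a<n. (\<Sum>b\<in>blockof n J a. v b) = 0"
  shows "avg n J v k = 0"
proof (cases "k < n")
  case True
  then have "(\<Sum>b\<in>blockof n J k. v b) = 0" using assms by blast
  then show ?thesis unfolding avg_def by simp
qed (simp add: avg_def)

lemma avg_blocksum: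
  assumes "a < n"
  shows "(\<Sum>b\<in>blockof n J a. avg n J x b) = (\<Sum>b\<in>blockof n J a. x b)"
proof -
  have "(\<Sum>b\<in>blockof n J a. avg n J x b) = (\<Sum>b\<in>blockof n J a. (\<Sum>c\<in>blockof n J a. x c) / real (card (blockof n J a)))"
  proof (intro sum.cong refl)
    fix b assume "b \<in> blockof n J a"
    then have "b < n" "sameblock J a b" unfolding blockof_def by auto
    then have "b < n" "blockof n J b = blockof n J a"
      using blockof_eq[of J a b n] by auto
    then show "avg n J x b = (\<Sum>c\<in>blockof n J a. x c) / real (card (blockof n J a))"
      unfolding avg_def by simp
  qed
  also have "\<dots> = (\<Sum>b\<in>blockof n J a. x b)"
  proof -
    have "card (blockof n J a) \<noteq> 0" using blockof_card_pos[OF assms, of J] by linarith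
    then show ?thesis by simp
  qed
  finally show ?thesis .
qed


lemma avg_sub_blocksum:
  assumes "J \<subseteq> K" "a < n"
  shows "(\<Sum>b\<in>blockof n K a. avg n J x b) = (\<Sum>b\<in>blockof n K a. x b)"
proof -
  let ?B = "blockof n K a"
  let ?i = "\<lambda>k. if k \<in> ?B then 1 else (0::real)"
  have sub: "?B \<subseteq> {..<n}" by (auto simp: blockof_def)
  have "(\<Sum>b\<in>?B. avg n J x b) = ip n (avg n J x) ?i" using ip_ind[OF sub] by simp
  also have "\<dots> = ip n x (avg n J ?i)" by (rule ip_avg)
  also have "\<dots> = ip n x ?i"
  proof (rule ip_cong)
    fix k assume "k < n"
    have "\<forall>aa<n. \<forall>b<n. sameblock J aa b \<longrightarrow> ?i aa = ?i b"
    proof (intro allI impI)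
      fix c d assume "c < n" "d < n" "sameblock J c d"
      then have "sameblock K c d" using sb_mono assms(1) by blast
      then have "blockof n K c = blockof n K d" by (rule blockof_eq)
      have "c \<in> ?B \<longleftrightarrow> d \<in> ?B"
      proof -
        have "sameblock K a c \<longleftrightarrow> sameblock K a d"
          using sb_trans[of K a c d] sb_trans[of K a d c] sb_sym[of K c d] \<open>sameblock K c d\<close> by blast
        then show ?thesis using \<open>c < n\<close> \<open>d < n\<close> unfolding blockof_def by simp
      qed
      then show "?i c = ?i d" by simp
    qed
    then show "avg n J ?i k = ?i k" by (rule avg_const[OF _ \<open>k < n\<close>])
  qed
  also have "\<dots> = (\<Sum>b\<in>?B. x b)" using ip_ind[OF sub] by simp
  finally show ?thesis .
qed


lemma piop_in:
  assumes "Q \<subseteq> R"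
  shows "piop n Q R x \<in> aQR n Q R"
  unfolding aQR_def
proof (intro CollectI conjI allI impI)
  show "piop n Q R x \<in> Vec n" unfolding Vec_def piop_def avg_def by simp
next
  fix a b assume "a < n" "b < n" "sameblock Q a b"
  moreover then have "sameblock R a b" using sb_mono assms by blast
  ultimately show "piop n Q R x a = piop n Q R x b"
    unfolding piop_def avg_def using blockof_eq[of Q a b n] blockof_eq[of R a b n] by simp
next
  fix a assume "a < n"
  have "(\<Sum>b\<in>blockof n R a. piop n Q R x b) = (\<Sum>b\<in>blockof n R a. avg n Q x b) - (\<Sum>b\<in>blockof n R a. avg n R x b)"
    unfolding piop_def by (simp add: sum_subtractf)
  also have "\<dots> = 0" using avg_sub_blocksum[OF assms \<open>a < n\<close>] avg_blocksum[OF \<open>a < n\<close>] by simp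
  finally show "(\<Sum>b\<in>blockof n R a. piop n Q R x b) = 0" .
qed


lemma piop_orth:
  assumes "v \<in> aQR n Q R"
  shows "ip n (\<lambda>k. x k - piop n Q R x k) v = 0"
proof -
  have c: "\<forall>a<n. \<forall>b<n. sameblock Q a b \<longrightarrow> v a = v b" and z: "\<forall>a<n. (\<Sum>b\<in>blockof n R a. v b) = 0"
    using assms unfolding aQR_def by blast+
  have e: "(\<lambda>k. x k - piop n Q R x k) = (\<lambda>k. (x k - avg n Q x k) + avg n R x k)"
    unfolding piop_def by (simp add: algebra_simps)
  have "ip n (avg n Q x) v = ip n x (avg n Q v)" by (rule ip_avg)
  also have "\<dots> = ip n x v" by (rule ip_cong) (rule avg_const[OF c])
  finally have 1: "ip n (avg n Q x) v = ip n x v" .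
  have "ip n (avg n R x) v = ip n x (avg n R v)" by (rule ip_avg)
  also have "\<dots> = 0" unfolding ip_def avg_zero[OF z] by simp
  finally have 2: "ip n (avg n R x) v = 0" .
  have "ip n (\<lambda>k. x k - piop n Q R x k) v = ip n (\<lambda>k. x k - avg n Q x k) v + ip n (avg n R x) v"
    unfolding e by (rule ip_add_left)
  also have "\<dots> = ip n x v - ip n (avg n Q x) v + ip n (avg n R x) v"
    by (simp only: ip_diff_left)
  finally show ?thesis using 1 2 by simp
qed

lemma aQR_diff:
  assumes "p \<in> aQR n Q R" "q \<in> aQR n Q R"
  shows "(\<lambda>k. p k - q k) \<in> aQR n Q R"
  unfolding aQR_def
proof (intro CollectI conjI allI impI)
  show "(\<lambda>k. p k - q k) \<in> Vec n" using assms unfolding aQR_def Vec_def by simp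
next
  fix a b assume "a < n" "b < n" "sameblock Q a b"
  moreover have "\<forall>a<n. \<forall>b<n. sameblock Q a b \<longrightarrow> p a = p b" "\<forall>a<n. \<forall>b<n. sameblock Q a b \<longrightarrow> q a = q b"
    using assms unfolding aQR_def by blast+
  ultimately show "p a - q a = p b - q b" by metis
next
  fix a assume "a < n"
  have "(\<Sum>b\<in>blockof n R a. p b - q b) = (\<Sum>b\<in>blockof n R a. p b) - (\<Sum>b\<in>blockof n R a. q b)"
    by (rule sum_subtractf)
  moreover have "(\<Sum>b\<in>blockof n R a. p b) = 0" "(\<Sum>b\<in>blockof n R a. q b) = 0"
    using assms \<open>a < n\<close> unfolding aQR_def by blast+
  ultimately show "(\<Sum>b\<in>blockof n R a. p b - q b) = 0" by simp
qed

lemma aQR_unique: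
  assumes "p \<in> aQR n Q R" "q \<in> aQR n Q R"
    and "\<forall>v\<in>aQR n Q R. ip n (\<lambda>k. x k - p k) v = 0"
    and "\<forall>v\<in>aQR n Q R. ip n (\<lambda>k. x k - q k) v = 0"
  shows "p = q"
proof -
  let ?d = "\<lambda>k. p k - q k"
  have d: "?d \<in> aQR n Q R" by (rule aQR_diff[OF assms(1,2)])
  have "(\<lambda>k. x k - q k) = (\<lambda>k. (x k - p k) + ?d k)" by auto
  then have "ip n (\<lambda>k. x k - q k) ?d = ip n (\<lambda>k. x k - p k) ?d + ip n ?d ?d"
    using ip_add_left[of n "\<lambda>k. x k - p k" ?d ?d] by simp
  moreover have "ip n (\<lambda>k. x k - q k) ?d = 0" "ip n (\<lambda>k. x k - p k) ?d = 0"
    using assms(3,4) d by blast+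
  ultimately have "ip n ?d ?d = 0" by simp
  then have "(\<Sum>k<n. ?d k * ?d k) = 0" unfolding ip_def .
  moreover have "\<forall>k\<in>{..<n}. 0 \<le> ?d k * ?d k" by simp
  ultimately have "\<forall>k\<in>{..<n}. ?d k * ?d k = 0" using sum_nonneg_eq_0_iff[of "{..<n}" "\<lambda>k. ?d k * ?d k"] by simp
  then have "\<forall>k<n. p k = q k" by auto
  moreover have "\<forall>k\<ge>n. p k = q k" using assms(1,2) unfolding aQR_def Vec_def by (metis (mono_tags, lifting) mem_Collect_eq)
  ultimately show ?thesis by (intro ext) (metis le_less_linear)
qed

lemma proj_eq:
  assumes "Q \<subseteq> R"
  shows "proj n Q R x = piop n Q R x"
  unfolding proj_def
proof (rule the_equality)
  show "piop n Q R x \<in> aQR n Q R \<and> (\<forall>v\<in>aQR n Q R. ip n (\<lambda>k. x k - piop n Q R x k) v = 0)"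
    using piop_in[OF assms] piop_orth by blast
  fix p assume "p \<in> aQR n Q R \<and> (\<forall>v\<in>aQR n Q R. ip n (\<lambda>k. x k - p k) v = 0)"
  then show "p = piop n Q R x"
    using aQR_unique[of p n Q R "piop n Q R x" x] piop_in[OF assms] piop_orth[of _ n Q R x] by blast
qed

lemma ip_piop: "ip n (piop n Q R x) y = ip n x (piop n Q R y)"
  unfolding piop_def ip_diff_left ip_diff_right ip_avg by simp




lemma sb_sep:
  assumes "sameblock J al x" "sameblock J be y" "al < be" "\<not> sameblock J al be"
  shows "x < y"
proof (rule ccontr)
  assume "\<not> x < y"
  then have "y \<le> x" by simp
  have "\<forall>j. al \<le> j \<and> j < be \<longrightarrow> j \<in> J"
  proof (intro allI impI)
    fix j assume j: "al \<le> j \<and> j < be"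
    show "j \<in> J"
    proof (cases "j < x")
      case True
      then show ?thesis using assms(1) j unfolding sameblock_def by auto
    next
      case False
      then show ?thesis using assms(2) j \<open>y \<le> x\<close> unfolding sameblock_def by auto
    qed
  qed
  then have "sameblock J al be" using sb_le[of al be J] assms(3) by simp
  then show False using assms(4) by simp
qed

lemma avg_diff:
  fixes T :: "nat \<Rightarrow> real"
  assumes "finite A" "finite B" "A \<noteq> {}" "B \<noteq> {}" "\<forall>x\<in>A. \<forall>y\<in>B. d \<le> T x - T y"
  shows "d \<le> (\<Sum>x\<in>A. T x) / real (card A) - (\<Sum>y\<in>B. T y) / real (card B)"
proof -
  have cA: "real (card A) > 0" and cB: "real (card B) > 0" using assms card_gt_0_iff by auto
  have "(\<Sum>x\<in>A. \<Sum>y\<in>B. T x - T y) = (\<Sum>x\<in>A. real (card B) * T x - (\<Sum>y\<in>B. T y))"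
    by (simp add: sum_subtractf)
  also have "\<dots> = real (card B) * (\<Sum>x\<in>A. T x) - real (card A) * (\<Sum>y\<in>B. T y)"
    by (simp add: sum_subtractf sum_distrib_left)
  finally have "(\<Sum>x\<in>A. \<Sum>y\<in>B. T x - T y) = real (card B) * (\<Sum>x\<in>A. T x) - real (card A) * (\<Sum>y\<in>B. T y)" .
  moreover have "(\<Sum>x\<in>A. \<Sum>y\<in>B. d) \<le> (\<Sum>x\<in>A. \<Sum>y\<in>B. T x - T y)"
    using assms(5) by (intro sum_mono) auto
  ultimately have "real (card A) * real (card B) * d \<le> real (card B) * (\<Sum>x\<in>A. T x) - real (card A) * (\<Sum>y\<in>B. T y)"
    by simp
  then show ?thesis using cA cB by (simp add: field_simps)
qed

lemma ip_act_perm: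
  assumes "p permutes {..<n}"
  shows "ip n (act p x) z = (\<Sum>k<n. x k * z (p k))"
proof -
  have "(\<Sum>k\<in>{..<n}. (\<lambda>j. x (inv p j) * z j) (p k)) = (\<Sum>j\<in>{..<n}. x (inv p j) * z j)"
    by (rule sum.reindex_bij_betw[OF permutes_imp_bij[OF assms]])
  then show ?thesis unfolding ip_def act_def using permutes_inverses(2)[OF assms] by simp
qed

lemma delta_sum:
  fixes h :: "nat \<Rightarrow> real"
  assumes "a < n" "b < n"
  shows "(\<Sum>k<n. ((if k = a then 1 else 0) - (if k = b then 1 else 0)) * h k) = h a - h b"
proof -
  have "(\<Sum>k<n. ((if k = a then 1 else 0) - (if k = b then 1 else 0)) * h k)
      = (\<Sum>k<n. (if k = a then h k else 0)) - (\<Sum>k<n. (if k = b then h k else 0))"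
  proof -
    have "\<And>k. ((if k = a then 1 else 0) - (if k = b then 1 else 0)) * h k = (if k = a then h k else 0) - (if k = b then h k else 0)"
      by simp
    then show ?thesis by (simp add: sum_subtractf)
  qed
  also have "\<dots> = h a - h b" using assms by (simp add: sum.delta')
  finally show ?thesis .
qed

lemma rho_sum:
  fixes h :: "nat \<Rightarrow> real"
  shows "(\<Sum>k<n. rho n S S' k * h k) =
     (1/2) * (\<Sum>(a,b)\<in>{(a,b). a < b \<and> b < n \<and> sameblock S' a b \<and> \<not> sameblock S a b}. h a - h b)"
proof -
  let ?Pr = "{(a,b). a < b \<and> b < n \<and> sameblock S' a b \<and> \<not> sameblock S a b}"
  have fin: "finite ?Pr"
    by (rule finite_subset[of _ "{..<n} \<times> {..<n}"]) auto
  have "(\<Sum>k<n. rho n S S' k * h k) = (\<Sum>k<n. (1/2) * (\<Sum>p\<in>?Pr. ((if k = fst p then 1 else 0) - (if k = snd p then 1 else 0)) * h k))"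
    unfolding rho_def by (intro sum.cong refl) (simp add: sum_distrib_right case_prod_beta)
  also have "\<dots> = (1/2) * (\<Sum>p\<in>?Pr. \<Sum>k<n. ((if k = fst p then 1 else 0) - (if k = snd p then 1 else 0)) * h k)"
  proof -
    have "(\<Sum>k<n. (1/2) * (\<Sum>p\<in>?Pr. ((if k = fst p then 1 else 0) - (if k = snd p then 1 else 0)) * h k))
      = (1/2) * (\<Sum>k<n. \<Sum>p\<in>?Pr. ((if k = fst p then 1 else 0) - (if k = snd p then 1 else 0)) * h k)"
      by (simp add: sum_distrib_left)
    also have "(\<Sum>k<n. \<Sum>p\<in>?Pr. ((if k = fst p then 1 else 0) - (if k = snd p then 1 else 0)) * h k)
       = (\<Sum>p\<in>?Pr. \<Sum>k<n. ((if k = fst p then 1 else 0) - (if k = snd p then 1 else 0)) * h k)"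
      by (rule sum.swap)
    finally show ?thesis .
  qed
  also have "\<dots> = (1/2) * (\<Sum>p\<in>?Pr. h (fst p) - h (snd p))"
  proof -
    have "\<And>p. p \<in> ?Pr \<Longrightarrow> (\<Sum>k<n. ((if k = fst p then 1 else 0) - (if k = snd p then 1 else 0)) * h k) = h (fst p) - h (snd p)"
      by (rule delta_sum) auto
    then show ?thesis by simp
  qed
  finally show ?thesis by (simp add: case_prod_beta)
qed



locale setting =
  fixes n :: nat and P R Q Ppi :: "nat set" and r :: "nat \<Rightarrow> nat" and w u :: "nat \<Rightarrow> nat"
  assumes Rsub: "R \<subseteq> {..<n-1}"
    and wW: "w \<in> WQS n R P"
    and QR: "Q \<subseteq> R"
    and uW: "u \<in> WQSR n R Q (parw n R P (inv w))"
    and pid: "pi_data n P r Ppi"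
begin

abbreviation "Rw \<equiv> parw n R P (inv w)"
abbreviation "Pw \<equiv> parw n P R w"
abbreviation "Pw' \<equiv> parw n P Q (u \<circ> w)"

lemma wperm: "w permutes {..<n}" using wW unfolding WQS_def Weyl_def by auto
lemma uperm: "u permutes {..<n}" using uW unfolding WQSR_def WQS_def Weyl_def by auto
lemma w'perm: "(u \<circ> w) permutes {..<n}" using permutes_compose[OF wperm uperm] .
lemma winvperm: "inv w permutes {..<n}" using permutes_inv[OF wperm] .

lemma w_lt: "a < n \<Longrightarrow> w a < n" using permutes_in_image[OF wperm] by simp
lemma u_lt: "a < n \<Longrightarrow> u a < n" using permutes_in_image[OF uperm] by simp
lemma winv_lt: "a < n \<Longrightarrow> inv w a < n" using permutes_in_image[OF winvperm] by simp
lemma w_inv1[simp]: "w (inv w x) = x" using permutes_inverses(1)[OF wperm] .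
lemma w_inv2[simp]: "inv w (w x) = x" using permutes_inverses(2)[OF wperm] .

lemma winc: "a < n \<Longrightarrow> b < n \<Longrightarrow> sameblock P a b \<Longrightarrow> a < b \<Longrightarrow> w a < w b"
  using wW unfolding WQS_def by auto

lemma winvinc: "a < n \<Longrightarrow> b < n \<Longrightarrow> sameblock R a b \<Longrightarrow> a < b \<Longrightarrow> inv w a < inv w b"
  using wW unfolding WQS_def by auto

lemma uinc: "a < n \<Longrightarrow> b < n \<Longrightarrow> sameblock Rw a b \<Longrightarrow> a < b \<Longrightarrow> u a < u b"
  using uW unfolding WQSR_def WQS_def by auto

lemma uR: "a < n \<Longrightarrow> sameblock R a (u a)"
  using uW unfolding WQSR_def WeylR_def by auto

lemma winvle: "a < n \<Longrightarrow> b < n \<Longrightarrow> sameblock R a b \<Longrightarrow> a \<le> b \<Longrightarrow> inv w a \<le> inv w b"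
  using winvinc by (cases "a = b") (auto simp: le_less)

lemma wle: "a < n \<Longrightarrow> b < n \<Longrightarrow> sameblock P a b \<Longrightarrow> a \<le> b \<Longrightarrow> w a \<le> w b"
  using winc by (cases "a = b") (auto simp: le_less)

lemma K3:
  assumes "sameblock Pw a b" "a < b" "b < n"
  shows "sameblock Rw (w a) (w b) \<and> w a < w b"
proof -
  have sP: "sameblock P a b" and sR: "sameblock R (w a) (w b)" using parw_block[OF assms(1)] by auto
  have lt: "w a < w b" using winc[OF _ assms(3) sP assms(2)] assms by simp
  have wb: "w b < n" using w_lt assms by simp
  have "\<forall>j. w a \<le> j \<and> j < w b \<longrightarrow> j \<in> Rw"
  proof (intro allI impI)
    fix j assume j: "w a \<le> j \<and> j < w b"
    have jR: "j \<in> R" using sR j lt unfolding sameblock_def by auto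
    have sj: "Suc j < n" using j wb by simp
    have sRj: "sameblock R (w a) j" "sameblock R (Suc j) (w b)"
      using sb_sub[OF sR] j lt by auto
    have "inv w (w a) \<le> inv w j" using winvle[OF _ _ sRj(1)] j sj w_lt assms by simp
    then have 1: "a \<le> inv w j" by simp
    have "inv w (Suc j) \<le> inv w (w b)" using winvle[OF sj wb sRj(2)] j by simp
    then have 2: "inv w (Suc j) \<le> b" by simp
    have "inv w j < inv w (Suc j)"
      using winvinc[of j "Suc j"] sj jR sb_consec by simp
    then have "sameblock P (inv w j) (inv w (Suc j))" using sb_sub[OF sP 1] 2 by simp
    then show "j \<in> Rw" unfolding parw_def using jR sj by simp
  qed
  then have "sameblock Rw (w a) (w b)" using sb_le[of "w a" "w b"] lt by simp
  then show ?thesis using lt by simp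
qed

lemma K4:
  assumes "sameblock Pw a b" "a < b" "b < n"
  shows "(u \<circ> w) a < (u \<circ> w) b \<and> sameblock R ((u \<circ> w) a) ((u \<circ> w) b)"
proof -
  have k3: "sameblock Rw (w a) (w b)" "w a < w b" using K3[OF assms] by auto
  have wa: "w a < n" "w b < n" using w_lt assms by auto
  have "u (w a) < u (w b)" using uinc[OF wa k3] .
  moreover have "sameblock R (w a) (w b)" using parw_block[OF assms(1)] by simp
  then have "sameblock R (u (w a)) (u (w b))"
    using uR[OF wa(1)] uR[OF wa(2)] sb_trans sb_sym by metis
  ultimately show ?thesis by simp
qed

lemma Pw'_sub: "Pw' \<subseteq> Pw"
proof
  fix i assume "i \<in> Pw'"
  then have i: "i \<in> P" "Suc i < n" "sameblock Q (u (w i)) (u (w (Suc i)))" unfolding parw_def by auto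
  have "sameblock R (u (w i)) (u (w (Suc i)))" using sb_mono[OF QR i(3)] .
  moreover have "w i < n" "w (Suc i) < n" using w_lt i by auto
  ultimately have "sameblock R (w i) (w (Suc i))"
    using uR sb_trans sb_sym by metis
  then show "i \<in> Pw" unfolding parw_def using i by simp
qed

lemma K6: "sameblock Pw' a b \<Longrightarrow> sameblock Q ((u \<circ> w) a) ((u \<circ> w) b)"
  using parw_block by blast

lemma Kmono:
  assumes "sameblock Pw a b" "a \<le> i" "i < j" "j \<le> b" "b < n"
  shows "(u \<circ> w) i < (u \<circ> w) j"
proof -
  have "sameblock Pw i j" using sb_sub[OF assms(1,2)] assms by simp
  then show ?thesis using K4[of i j] assms by simp
qed

lemma Knotsame:
  assumes "a < b" "b < n" "sameblock Pw a b" "\<not> sameblock Pw' a b"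
  shows "\<not> sameblock Q ((u \<circ> w) a) ((u \<circ> w) b)"
proof
  assume sQ: "sameblock Q ((u \<circ> w) a) ((u \<circ> w) b)"
  have sP: "sameblock P a b" using parw_block[OF assms(3)] by simp
  have "\<forall>i. a \<le> i \<and> i < b \<longrightarrow> i \<in> Pw'"
  proof (intro allI impI)
    fix i assume i: "a \<le> i \<and> i < b"
    have iP: "i \<in> P" using sP i unfolding sameblock_def by auto
    have si: "Suc i < n" using i assms by simp
    have m1: "(u \<circ> w) a \<le> (u \<circ> w) i"
      using Kmono[OF assms(3), of a i] i assms by (cases "a = i") auto
    have m2: "(u \<circ> w) (Suc i) \<le> (u \<circ> w) b"
      using Kmono[OF assms(3), of "Suc i" b] i assms by (cases "Suc i = b") auto
    have m3: "(u \<circ> w) i < (u \<circ> w) (Suc i)"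
      using Kmono[OF assms(3), of i "Suc i"] i assms by simp
    have "sameblock Q ((u \<circ> w) i) ((u \<circ> w) (Suc i))"
      using sb_sub[OF sQ m1] m2 m3 by simp
    then show "i \<in> Pw'" unfolding parw_def using iP si by simp
  qed
  then have "sameblock Pw' a b" using sb_le[of a b] assms by simp
  then show False using assms by simp
qed

lemma Kstep:
  assumes "j \<in> Rw" "Pw = Pw'"
  shows "sameblock Q (u j) (u (Suc j))"
proof -
  have j: "j \<in> R" "Suc j < n" "sameblock P (inv w j) (inv w (Suc j))"
    using assms(1) unfolding parw_def by auto
  let ?x = "inv w j" and ?y = "inv w (Suc j)"
  have xy: "?x < n" "?y < n" using winv_lt j by auto
  have lt: "?x < ?y" using winvinc[of j "Suc j"] j sb_consec by simp
  have "\<forall>i. ?x \<le> i \<and> i < ?y \<longrightarrow> i \<in> Pw"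
  proof (intro allI impI)
    fix i assume i: "?x \<le> i \<and> i < ?y"
    have iP: "i \<in> P" using j(3) i unfolding sameblock_def by auto
    have si: "Suc i < n" using i xy by simp
    have "w ?x \<le> w i" using wle[of ?x i] sb_sub[OF j(3), of ?x i] i xy by simp
    then have 1: "j \<le> w i" by simp
    have "w (Suc i) \<le> w ?y" using wle[of "Suc i" ?y] sb_sub[OF j(3), of "Suc i" ?y] i xy by simp
    then have 2: "w (Suc i) \<le> Suc j" by simp
    have 3: "w i < w (Suc i)" using winc[of i "Suc i"] si iP sb_consec by simp
    have "w i = j" "w (Suc i) = Suc j" using 1 2 3 by auto
    then have "sameblock R (w i) (w (Suc i))" using j sb_consec by simp
    then show "i \<in> Pw" unfolding parw_def using iP si by simp
  qed
  then have "sameblock Pw ?x ?y" using sb_le[of ?x ?y] lt by simp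
  then have "sameblock Pw' ?x ?y" using assms(2) by simp
  then have "sameblock Q ((u \<circ> w) ?x) ((u \<circ> w) ?y)" by (rule K6)
  then show ?thesis by simp
qed

lemma K7: "Pw = Pw' \<longleftrightarrow> (\<forall>a<n. \<forall>b<n. sameblock Rw a b \<longrightarrow> sameblock Q (u a) (u b))"
proof
  assume eq: "Pw = Pw'"
  have le: "sameblock Q (u a) (u b)" if "sameblock Rw a b" "a \<le> b" for a b
    by (rule sb_chain[OF _ that(2)]) (use that Kstep[OF _ eq] in \<open>auto simp: sb_le\<close>)
  show "\<forall>a<n. \<forall>b<n. sameblock Rw a b \<longrightarrow> sameblock Q (u a) (u b)"
  proof (intro allI impI)
    fix a b assume "a < n" "b < n" "sameblock Rw a b"
    then show "sameblock Q (u a) (u b)"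
      using le[of a b] le[of b a] sb_sym by (cases "a \<le> b") auto
  qed
next
  assume c: "\<forall>a<n. \<forall>b<n. sameblock Rw a b \<longrightarrow> sameblock Q (u a) (u b)"
  have "Pw \<subseteq> Pw'"
  proof
    fix i assume iw: "i \<in> Pw"
    then have i: "i \<in> P" "Suc i < n" unfolding parw_def by auto
    have "sameblock Pw i (Suc i)" using iw sb_consec by simp
    then have "sameblock Rw (w i) (w (Suc i))" using K3 i by simp
    then have "sameblock Q (u (w i)) (u (w (Suc i)))" using c w_lt i by simp
    then show "i \<in> Pw'" unfolding parw_def using i by simp
  qed
  then show "Pw = Pw'" using Pw'_sub by blast
qed

end



lemma mono_from_sroot:
  fixes v :: "nat \<Rightarrow> real"
  assumes "\<forall>j. x \<le> j \<and> j < y \<longrightarrow> 0 \<le> sroot j v" "x \<le> y"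
  shows "v y \<le> v x"
  using assms
proof (induction y)
  case 0 then show ?case by simp
next
  case (Suc y)
  show ?case
  proof (cases "x = Suc y")
    case True then show ?thesis by simp
  next
    case False
    then have "x \<le> y" using Suc.prems by simp
    then have "v y \<le> v x" using Suc by simp
    moreover have "0 \<le> sroot y v" using Suc.prems \<open>x \<le> y\<close> by simp
    ultimately show ?thesis unfolding sroot_def by simp
  qed
qed

lemma coweight_mono:
  assumes v: "v \<in> coweights n Q R" and Rs: "R \<subseteq> {..<n-1}"
    and "x \<le> y" "y < n" "sameblock R x y"
  shows "v y \<le> v x"
proof (rule mono_from_sroot[OF _ assms(3)], intro allI impI)
  fix j assume j: "x \<le> j \<and> j < y"
  have jR: "j \<in> R" using assms(5) j unfolding sameblock_def by auto
  have sj: "Suc j < n" using jR Rs by auto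
  obtain i where i: "i \<in> R - Q" "\<forall>j\<in>R - Q. sroot j v = (if j = i then 1 else 0)"
    using v unfolding coweights_def by blast
  have c: "\<forall>a<n. \<forall>b<n. sameblock Q a b \<longrightarrow> v a = v b"
    using v unfolding coweights_def aQR_def by blast
  show "0 \<le> sroot j v"
  proof (cases "j \<in> Q")
    case True
    then have "sameblock Q j (Suc j)" using sb_consec by simp
    then have "v j = v (Suc j)" using c sj by (meson Suc_lessD)
    then show ?thesis unfolding sroot_def by simp
  next
    case False
    then have "sroot j v = (if j = i then 1 else 0)" using i jR by blast
    then show ?thesis by simp
  qed
qed

lemma aQR_total:
  assumes "v \<in> aQR n Q R"
  shows "(\<Sum>k<n. v k) = 0"
proof -
  have z: "\<forall>a<n. (\<Sum>b\<in>blockof n R a. v b) = 0" using assms unfolding aQR_def by blast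
  have "(\<Sum>k<n. v k) = ip n v (\<lambda>_. 1)" unfolding ip_def by simp
  also have "\<dots> = ip n v (avg n R (\<lambda>_. 1))"
    by (rule ip_cong) (rule avg_const[symmetric], auto)
  also have "\<dots> = ip n (avg n R v) (\<lambda>_. 1)" by (rule ip_avg[symmetric])
  also have "\<dots> = 0" unfolding ip_def avg_zero[OF z] by simp
  finally show ?thesis .
qed

lemma Gpar_block: "a < n \<Longrightarrow> blockof n (Gpar n) a = {..<n}"
  unfolding blockof_def Gpar_def sameblock_def by auto



context setting
begin

abbreviation "Pr \<equiv> {(a,b). a < b \<and> b < n \<and> sameblock Pw a b \<and> \<not> sameblock Pw' a b}"
abbreviation "X \<equiv> act (u \<circ> w) (nu n r Pw' Pw)"

lemma Pr_fin: "finite Pr"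
  by (rule finite_subset[of _ "{..<n} \<times> {..<n}"]) (auto simp del: )

lemma rpos: "k < n \<Longrightarrow> 0 < r k" using pid unfolding pi_data_def by blast
lemma rblock: "a < n \<Longrightarrow> b < n \<Longrightarrow> sameblock P a b \<Longrightarrow> r a = r b"
  using pid unfolding pi_data_def by blast
lemma rle: "a < n \<Longrightarrow> r a \<le> n"
proof -
  assume a: "a < n"
  have "card (blockof n Ppi a) \<le> card {..<n}" by (rule card_mono) (auto simp: blockof_def)
  moreover have "card (blockof n Ppi a) = r a" using pid a unfolding pi_data_def by blast
  ultimately show ?thesis by simp
qed

lemma w'_lt: "a < n \<Longrightarrow> (u \<circ> w) a < n" using w_lt u_lt by simp

lemma K8:
  "ip n X z = -(1/2) * (\<Sum>(a,b)\<in>Pr. (z ((u \<circ> w) a) - z ((u \<circ> w) b)) / real (r a))"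
proof -
  let ?h = "\<lambda>k. z ((u \<circ> w) k) / real (r k)"
  have "ip n X z = (\<Sum>k<n. nu n r Pw' Pw k * z ((u \<circ> w) k))"
    by (rule ip_act_perm[OF w'perm])
  also have "\<dots> = (\<Sum>k<n. - (rho n Pw' Pw k * ?h k))"
    unfolding nu_def by (intro sum.cong refl) simp
  also have "\<dots> = - (\<Sum>k<n. rho n Pw' Pw k * ?h k)" by (simp add: sum_negf)
  also have "\<dots> = - ((1/2) * (\<Sum>(a,b)\<in>Pr. ?h a - ?h b))" by (simp only: rho_sum)
  also have "(\<Sum>(a,b)\<in>Pr. ?h a - ?h b) = (\<Sum>(a,b)\<in>Pr. (z ((u \<circ> w) a) - z ((u \<circ> w) b)) / real (r a))"
  proof (intro sum.cong refl, clarify)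
    fix a b assume ab: "a < b" "b < n" "sameblock Pw a b"
    have "r a = r b" using rblock[of a b] parw_block[OF ab(3)] ab by simp
    then show "?h a - ?h b = (z ((u \<circ> w) a) - z ((u \<circ> w) b)) / real (r a)"
      by (simp add: diff_divide_distrib)
  qed
  finally show ?thesis unfolding comp_def by simp
qed

lemma part1:
  assumes v: "v \<in> coweights n Q R"
  shows "ip n X v \<le> 0 \<and> (ip n X v = 0 \<longleftrightarrow> v \<in> act (u \<circ> w) ` aQR n Pw (Gpar n))"
proof -
  let ?t = "\<lambda>(a,b). (v ((u \<circ> w) a) - v ((u \<circ> w) b)) / real (r a)"
  have vQ: "v \<in> aQR n Q R" using v unfolding coweights_def by blast
  have c: "\<forall>a<n. \<forall>b<n. sameblock Q a b \<longrightarrow> v a = v b"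
    using vQ unfolding aQR_def by blast
  have tnn: "\<forall>p\<in>Pr. 0 \<le> ?t p"
  proof
    fix p assume p: "p \<in> Pr"
    obtain a b where pab: "p = (a,b)" by (cases p)
    from p pab have ab: "a < b" "b < n" "sameblock Pw a b" "\<not> sameblock Pw' a b" by auto
    have k4: "(u \<circ> w) a < (u \<circ> w) b" "sameblock R ((u \<circ> w) a) ((u \<circ> w) b)" using K4 ab by auto
    have "v ((u \<circ> w) b) \<le> v ((u \<circ> w) a)"
      using coweight_mono[OF v Rsub _ _ k4(2)] k4(1) w'_lt ab by simp
    then show "0 \<le> ?t p" unfolding pab using rpos[of a] ab by simp
  qed
  have ipe: "ip n X v = -(1/2) * sum ?t Pr" using K8 by simp
  have s0: "0 \<le> sum ?t Pr" by (intro sum_nonneg) (use tnn in blast)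
  have "ip n X v = 0 \<longleftrightarrow> sum ?t Pr = 0" using ipe by simp
  also have "\<dots> \<longleftrightarrow> (\<forall>p\<in>Pr. ?t p = 0)" by (rule sum_nonneg_eq_0_iff[OF Pr_fin]) (use tnn in blast)
  also have "\<dots> \<longleftrightarrow> (\<forall>a<n. \<forall>b<n. sameblock Pw a b \<longrightarrow> v ((u \<circ> w) a) = v ((u \<circ> w) b))"
  proof
    assume H: "\<forall>p\<in>Pr. ?t p = 0"
    have lt: "v ((u \<circ> w) a) = v ((u \<circ> w) b)" if ab: "a < b" "b < n" "sameblock Pw a b" for a b
    proof (cases "sameblock Pw' a b")
      case True
      then have "sameblock Q ((u \<circ> w) a) ((u \<circ> w) b)" by (rule K6)
      moreover have "(u \<circ> w) a < n" "(u \<circ> w) b < n" using w'_lt ab by auto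
      ultimately show ?thesis using c by blast
    next
      case False
      then have "(a,b) \<in> Pr" using ab by simp
      with H have "?t (a,b) = 0" by (rule bspec)
      then show ?thesis using rpos[of a] ab by simp
    qed
    show "\<forall>a<n. \<forall>b<n. sameblock Pw a b \<longrightarrow> v ((u \<circ> w) a) = v ((u \<circ> w) b)"
    proof (intro allI impI)
      fix a b assume ab: "a < n" "b < n" "sameblock Pw a b"
      consider "a = b" | "a < b" | "b < a" by linarith
      then show "v ((u \<circ> w) a) = v ((u \<circ> w) b)"
      proof cases
        case 2 then show ?thesis using lt ab by blast
      next
        case 3
        have "sameblock Pw b a" using ab(3) sb_sym[of Pw a b] by simp
        then show ?thesis using lt[of b a] ab 3 by simp
      qed simp
    qed
  next
    assume H: "\<forall>a<n. \<forall>b<n. sameblock Pw a b \<longrightarrow> v ((u \<circ> w) a) = v ((u \<circ> w) b)"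
    show "\<forall>p\<in>Pr. ?t p = 0"
    proof
      fix p assume p: "p \<in> Pr"
      obtain a b where pab: "p = (a,b)" by (cases p)
      from p pab have ab: "a < b" "b < n" "sameblock Pw a b" by auto
      then have "a < n" by simp
      then have "v ((u \<circ> w) a) = v ((u \<circ> w) b)" using H ab by blast
      then show "?t p = 0" unfolding pab by simp
    qed
  qed
  also have "\<dots> \<longleftrightarrow> (\<lambda>k. v ((u \<circ> w) k)) \<in> aQR n Pw (Gpar n)"
  proof
    assume H: "\<forall>a<n. \<forall>b<n. sameblock Pw a b \<longrightarrow> v ((u \<circ> w) a) = v ((u \<circ> w) b)"
    show "(\<lambda>k. v ((u \<circ> w) k)) \<in> aQR n Pw (Gpar n)"
      unfolding aQR_def
    proof (intro CollectI conjI allI impI)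
      show "(\<lambda>k. v ((u \<circ> w) k)) \<in> Vec n"
        unfolding Vec_def
      proof (intro CollectI allI impI)
        fix k assume "n \<le> k"
        then have "(u \<circ> w) k = k" using permutes_not_in[OF w'perm] by simp
        moreover have "v \<in> Vec n" using vQ unfolding aQR_def by blast
        ultimately show "v ((u \<circ> w) k) = 0" using \<open>n \<le> k\<close> unfolding Vec_def by simp
      qed
    next
      fix a b assume "a < n" "b < n" "sameblock Pw a b"
      then show "v ((u \<circ> w) a) = v ((u \<circ> w) b)" using H by blast
    next
      fix a assume "a < n"
      have "(\<Sum>k\<in>{..<n}. v ((u \<circ> w) k)) = (\<Sum>k\<in>{..<n}. v k)"
        by (rule sum.reindex_bij_betw[OF permutes_imp_bij[OF w'perm]])
      then show "(\<Sum>b\<in>blockof n (Gpar n) a. v ((u \<circ> w) b)) = 0"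
        using Gpar_block[OF \<open>a < n\<close>] aQR_total[OF vQ] by simp
    qed
  next
    assume "(\<lambda>k. v ((u \<circ> w) k)) \<in> aQR n Pw (Gpar n)"
    then show "\<forall>a<n. \<forall>b<n. sameblock Pw a b \<longrightarrow> v ((u \<circ> w) a) = v ((u \<circ> w) b)"
      unfolding aQR_def by blast
  qed
  also have "\<dots> \<longleftrightarrow> v \<in> act (u \<circ> w) ` aQR n Pw (Gpar n)"
  proof
    assume "(\<lambda>k. v ((u \<circ> w) k)) \<in> aQR n Pw (Gpar n)"
    moreover have "act (u \<circ> w) (\<lambda>k. v ((u \<circ> w) k)) = v"
      unfolding act_def using permutes_inverses(1)[OF w'perm] by simp
    ultimately show "v \<in> act (u \<circ> w) ` aQR n Pw (Gpar n)" by (metis image_eqI)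
  next
    assume "v \<in> act (u \<circ> w) ` aQR n Pw (Gpar n)"
    then obtain z where z: "z \<in> aQR n Pw (Gpar n)" "v = act (u \<circ> w) z" by blast
    have "(\<lambda>k. v ((u \<circ> w) k)) = z"
      unfolding z(2) act_def using permutes_inverses(2)[OF w'perm] by simp
    then show "(\<lambda>k. v ((u \<circ> w) k)) \<in> aQR n Pw (Gpar n)" using z by simp
  qed
  finally show ?thesis using ipe s0 by simp
qed

end



lemma piop_zero: "piop n Q R (\<lambda>k. 0) = (\<lambda>k. 0)"
  unfolding piop_def avg_def by (intro ext) simp

lemma Tmono:
  fixes T :: "nat \<Rightarrow> real"
  assumes "\<forall>i<n-1. 0 \<le> sroot i T" "x \<le> y" "y < n"
  shows "T y \<le> T x"
  by (rule mono_from_sroot[OF _ assms(2)]) (use assms in auto)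

context setting
begin

lemma L3:
  assumes dl: "\<forall>x y. x < y \<longrightarrow> y < n \<longrightarrow> d \<le> T x - T y"
  shows "ip n X (piop n Q R T) \<le> -(1/2) * (d * (\<Sum>(a,b)\<in>Pr. 1 / real (r a)))"
proof -
  let ?t = "\<lambda>(a,b). (piop n Q R T ((u \<circ> w) a) - piop n Q R T ((u \<circ> w) b)) / real (r a)"
  let ?s = "\<lambda>(a,b). d * (1 / real (r a))"
  have ge: "?s p \<le> ?t p" if p: "p \<in> Pr" for p
  proof -
    obtain a b where pab: "p = (a,b)" by (cases p)
    from p pab have ab: "a < b" "b < n" "sameblock Pw a b" "\<not> sameblock Pw' a b" by auto
    let ?al = "(u \<circ> w) a" and ?be = "(u \<circ> w) b"
    have k4: "?al < ?be" "sameblock R ?al ?be" using K4 ab by auto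
    have ns: "\<not> sameblock Q ?al ?be" using Knotsame ab by blast
    have lt: "?al < n" "?be < n" using w'_lt ab by auto
    have eqR: "avg n R T ?al = avg n R T ?be"
      unfolding avg_def using blockof_eq[OF k4(2), of n] lt by simp
    let ?A = "blockof n Q ?al" and ?B = "blockof n Q ?be"
    have "d \<le> (\<Sum>x\<in>?A. T x) / real (card ?A) - (\<Sum>y\<in>?B. T y) / real (card ?B)"
    proof (rule avg_diff)
      show "?A \<noteq> {}" "?B \<noteq> {}" using blockof_self lt by blast+
      show "\<forall>x\<in>?A. \<forall>y\<in>?B. d \<le> T x - T y"
      proof (intro ballI)
        fix x y assume x: "x \<in> ?A" and y: "y \<in> ?B"
        then have "sameblock Q ?al x" "sameblock Q ?be y" "y < n" unfolding blockof_def by auto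
        then have "x < y" "y < n" using sb_sep[of Q ?al x ?be y] k4 ns by auto
        then show "d \<le> T x - T y" using dl by blast
      qed
    qed simp_all
    then have "d \<le> avg n Q T ?al - avg n Q T ?be" unfolding avg_def using lt by simp
    then have "d \<le> piop n Q R T ?al - piop n Q R T ?be" unfolding piop_def using eqR by simp
    moreover have "0 < real (r a)" using rpos ab by simp
    ultimately have "d / real (r a) \<le> (piop n Q R T ?al - piop n Q R T ?be) / real (r a)"
      by (rule divide_right_mono[OF _ less_imp_le])
    then show ?thesis unfolding pab by simp
  qed
  have "sum ?s Pr \<le> sum ?t Pr" by (rule sum_mono) (rule ge)
  moreover have "sum ?s Pr = d * (\<Sum>(a,b)\<in>Pr. 1 / real (r a))"
    by (simp add: sum_distrib_left case_prod_beta)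
  moreover have "ip n X (piop n Q R T) = -(1/2) * sum ?t Pr" by (rule K8)
  ultimately show ?thesis by simp
qed

lemma cpos:
  assumes "Pr \<noteq> {}"
  shows "1 / real n \<le> (\<Sum>(a,b)\<in>Pr. 1 / real (r a))"
proof -
  obtain a b where ab: "(a,b) \<in> Pr" using assms by auto
  then have a: "a < n" by simp
  have "1 / real (r a) \<le> (\<Sum>(a,b)\<in>Pr. 1 / real (r a))"
  proof -
    have "(\<lambda>(a,b). 1 / real (r a)) (a,b) \<le> (\<Sum>p\<in>Pr. (\<lambda>(a,b). 1 / real (r a)) p)"
      by (rule member_le_sum[OF ab _ Pr_fin]) (auto simp: case_prod_beta)
    then show ?thesis by simp
  qed
  moreover have "1 / real n \<le> 1 / real (r a)"
    using rpos[OF a] rle[OF a] by (simp add: frac_le)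
  ultimately show ?thesis by linarith
qed

lemma Pr_empty_iff: "Pr = {} \<longleftrightarrow> Pw = Pw'"
proof
  assume e: "Pr = {}"
  have "Pw \<subseteq> Pw'"
  proof
    fix i assume i: "i \<in> Pw"
    then have si: "Suc i < n" unfolding parw_def by simp
    have sw: "sameblock Pw i (Suc i)" using i sb_consec by simp
    show "i \<in> Pw'"
    proof (rule ccontr)
      assume "i \<notin> Pw'"
      then have "\<not> sameblock Pw' i (Suc i)" using sb_consec by simp
      then have "(i, Suc i) \<in> Pr" using si sw by simp
      then show False using e by simp
    qed
  qed
  then show "Pw = Pw'" using Pw'_sub by blast
next
  assume "Pw = Pw'"
  then show "Pr = {}" by simp
qed

lemma X_zero: "Pw = Pw' \<Longrightarrow> X = (\<lambda>k. 0)"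
proof -
  assume e: "Pw = Pw'"
  have "rho n Pw' Pw = (\<lambda>k. 0)" unfolding rho_def using e by simp
  then show ?thesis unfolding nu_def act_def by simp
qed

lemma WRSQ_iff: "(\<exists>u'\<in>WRSQ n R Rw Q. u \<circ> w = u' \<circ> w) \<longleftrightarrow> Pw = Pw'"
proof
  assume "\<exists>u'\<in>WRSQ n R Rw Q. u \<circ> w = u' \<circ> w"
  then obtain u' where u': "u' \<in> WRSQ n R Rw Q" "u \<circ> w = u' \<circ> w" by blast
  have "u = u'"
  proof
    fix x
    have "u x = (u \<circ> w) (inv w x)" by simp
    also have "\<dots> = (u' \<circ> w) (inv w x)" using u'(2) by simp
    finally show "u x = u' x" by simp
  qed
  then have "\<forall>a<n. \<forall>b<n. sameblock Rw a b \<longrightarrow> sameblock Q (u a) (u b)"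
    using u'(1) unfolding WRSQ_def by blast
  then show "Pw = Pw'" using K7 by blast
next
  assume "Pw = Pw'"
  then have "\<forall>a<n. \<forall>b<n. sameblock Rw a b \<longrightarrow> sameblock Q (u a) (u b)" using K7 by blast
  then have "u \<in> WRSQ n R Rw Q" unfolding WRSQ_def using uW by blast
  then show "\<exists>u'\<in>WRSQ n R Rw Q. u \<circ> w = u' \<circ> w" by blast
qed

lemma part2:
  "(Pw = Pw' \<longleftrightarrow> proj n Q R X = (\<lambda>k. 0)) \<and>
   (proj n Q R X = (\<lambda>k. 0) \<longleftrightarrow> (\<exists>u'\<in>WRSQ n R Rw Q. u \<circ> w = u' \<circ> w))"
proof -
  have A: "Pw = Pw' \<longleftrightarrow> proj n Q R X = (\<lambda>k. 0)"
  proof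
    assume "Pw = Pw'"
    then show "proj n Q R X = (\<lambda>k. 0)" using X_zero proj_eq[OF QR] piop_zero by simp
  next
    assume p0: "proj n Q R X = (\<lambda>k. 0)"
    let ?T = "\<lambda>k. - real k"
    have "ip n X (piop n Q R ?T) = ip n (piop n Q R X) ?T" by (rule ip_piop[symmetric])
    also have "\<dots> = 0" using p0 proj_eq[OF QR] unfolding ip_def by simp
    finally have z: "ip n X (piop n Q R ?T) = 0" .
    have "ip n X (piop n Q R ?T) \<le> -(1/2) * (1 * (\<Sum>(a,b)\<in>Pr. 1 / real (r a)))"
      by (rule L3) auto
    then have S: "(\<Sum>(a,b)\<in>Pr. 1 / real (r a)) \<le> 0" using z by simp
    show "Pw = Pw'"
    proof (rule ccontr)
      assume "Pw \<noteq> Pw'"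
      then have ne: "Pr \<noteq> {}" using Pr_empty_iff by blast
      then obtain a b where "(a,b) \<in> Pr" by auto
      then have "0 < n" by simp
      then have "0 < 1 / real n" by simp
      then show False using cpos[OF ne] S by linarith
    qed
  qed
  then show ?thesis using WRSQ_iff by blast
qed

lemma part3:
  assumes dom: "\<forall>i<n-1. 0 \<le> sroot i T"
    and nc: "\<not> (\<exists>u'\<in>WRSQ n R Rw Q. u \<circ> w = u' \<circ> w)"
  shows "ip n (proj n Q R X) T \<le> - (1 / (2 * real n)) * dT n T"
proof -
  have "Pw \<noteq> Pw'" using nc WRSQ_iff by blast
  then have ne: "Pr \<noteq> {}" using Pr_empty_iff by blast
  then obtain a b where ab: "(a,b) \<in> Pr" by auto
  then have an: "a < n - 1" by auto
  let ?D = "(\<lambda>i. sroot i T) ` {..<n-1}"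
  have finD: "finite ?D" and neD: "?D \<noteq> {}" using an by auto
  have d0: "0 \<le> dT n T" unfolding dT_def using Min_ge_iff[OF finD neD] dom by auto
  have dl: "\<forall>x y. x < y \<longrightarrow> y < n \<longrightarrow> dT n T \<le> T x - T y"
  proof (intro allI impI)
    fix x y assume xy: "x < y" "y < n"
    then have x: "x < n - 1" by simp
    have "dT n T \<le> sroot x T" unfolding dT_def using finD x by (intro Min_le) auto
    moreover have "T y \<le> T (Suc x)" using Tmono[OF dom, of "Suc x" y] xy by simp
    ultimately show "dT n T \<le> T x - T y" unfolding sroot_def by simp
  qed
  have "ip n (proj n Q R X) T = ip n X (piop n Q R T)"
    using proj_eq[OF QR] ip_piop by simp
  also have "\<dots> \<le> -(1/2) * (dT n T * (\<Sum>(a,b)\<in>Pr. 1 / real (r a)))" by (rule L3[OF dl])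
  also have "\<dots> \<le> -(1/2) * (dT n T * (1 / real n))"
    using mult_left_mono[OF cpos[OF ne] d0] by simp
  also have "\<dots> = - (1 / (2 * real n)) * dT n T" by simp
  finally show ?thesis .
qed

end


theorem mainTheorem11:
  fixes n :: nat and P R Ppi :: "nat set" and r :: "nat \<Rightarrow> nat" and w :: "nat \<Rightarrow> nat"
  assumes "1 \<le> n"
    and "stdpar n P" and "stdpar n R"
    and "pi_data n P r Ppi"
    and "w \<in> WQS n R P"
  shows
    "(\<forall>Q u. Q \<subseteq> R \<longrightarrow> u \<in> WQSR n R Q (parw n R P (inv w)) \<longrightarrow>
        Ppi \<subseteq> parw n P Q (u \<circ> w) \<longrightarrow>
        (\<forall>v \<in> coweights n Q R.
           ip n (act (u \<circ> w) (nu n r (parw n P Q (u \<circ> w)) (parw n P R w))) v \<le> 0 \<and>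
           (ip n (act (u \<circ> w) (nu n r (parw n P Q (u \<circ> w)) (parw n P R w))) v = 0 \<longleftrightarrow>
              v \<in> act (u \<circ> w) ` aQR n (parw n P R w) (Gpar n))))
   \<and> (\<forall>Q u. Q \<subseteq> R \<longrightarrow> u \<in> WQSR n R Q (parw n R P (inv w)) \<longrightarrow>
        Ppi \<subseteq> parw n P Q (u \<circ> w) \<longrightarrow>
        ((parw n P R w = parw n P Q (u \<circ> w) \<longleftrightarrow>
            proj n Q R (act (u \<circ> w) (nu n r (parw n P Q (u \<circ> w)) (parw n P R w))) = (\<lambda>k. 0))
         \<and> (proj n Q R (act (u \<circ> w) (nu n r (parw n P Q (u \<circ> w)) (parw n P R w))) = (\<lambda>k. 0)
            \<longleftrightarrow> (\<exists>u' \<in> WRSQ n R (parw n R P (inv w)) Q. u \<circ> w = u' \<circ> w))))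
   \<and> (\<exists>c1 > 0. \<forall>T Q u. T \<in> Vec n \<longrightarrow> (\<forall>i<n-1. 0 \<le> sroot i T) \<longrightarrow> Q \<subseteq> R \<longrightarrow>
        u \<in> WQSR n R Q (parw n R P (inv w)) \<longrightarrow>
        \<not> (\<exists>u' \<in> WRSQ n R (parw n R P (inv w)) Q. u \<circ> w = u' \<circ> w) \<longrightarrow>
        Ppi \<subseteq> parw n P Q (u \<circ> w) \<longrightarrow>
        ip n (proj n Q R (act (u \<circ> w) (nu n r (parw n P Q (u \<circ> w)) (parw n P R w)))) T
          \<le> - c1 * dT n T)"
proof -
  have Rs: "R \<subseteq> {..<n-1}" using assms(3) unfolding stdpar_def .
  have loc: "setting n P R Q Ppi r w u" if "Q \<subseteq> R" "u \<in> WQSR n R Q (parw n R P (inv w))" for Q u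
    by (unfold_locales) (use Rs assms(4,5) that in auto)
  have P1: "\<forall>Q u. Q \<subseteq> R \<longrightarrow> u \<in> WQSR n R Q (parw n R P (inv w)) \<longrightarrow>
        Ppi \<subseteq> parw n P Q (u \<circ> w) \<longrightarrow>
        (\<forall>v \<in> coweights n Q R.
           ip n (act (u \<circ> w) (nu n r (parw n P Q (u \<circ> w)) (parw n P R w))) v \<le> 0 \<and>
           (ip n (act (u \<circ> w) (nu n r (parw n P Q (u \<circ> w)) (parw n P R w))) v = 0 \<longleftrightarrow>
              v \<in> act (u \<circ> w) ` aQR n (parw n P R w) (Gpar n)))"
    using setting.part1[OF loc] by blast
  have P2: "\<forall>Q u. Q \<subseteq> R \<longrightarrow> u \<in> WQSR n R Q (parw n R P (inv w)) \<longrightarrow>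
        Ppi \<subseteq> parw n P Q (u \<circ> w) \<longrightarrow>
        ((parw n P R w = parw n P Q (u \<circ> w) \<longleftrightarrow>
            proj n Q R (act (u \<circ> w) (nu n r (parw n P Q (u \<circ> w)) (parw n P R w))) = (\<lambda>k. 0))
         \<and> (proj n Q R (act (u \<circ> w) (nu n r (parw n P Q (u \<circ> w)) (parw n P R w))) = (\<lambda>k. 0)
            \<longleftrightarrow> (\<exists>u' \<in> WRSQ n R (parw n R P (inv w)) Q. u \<circ> w = u' \<circ> w)))"
    using setting.part2[OF loc] by blast
  have P3: "\<forall>T Q u. T \<in> Vec n \<longrightarrow> (\<forall>i<n-1. 0 \<le> sroot i T) \<longrightarrow> Q \<subseteq> R \<longrightarrow>
        u \<in> WQSR n R Q (parw n R P (inv w)) \<longrightarrow>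
        \<not> (\<exists>u' \<in> WRSQ n R (parw n R P (inv w)) Q. u \<circ> w = u' \<circ> w) \<longrightarrow>
        Ppi \<subseteq> parw n P Q (u \<circ> w) \<longrightarrow>
        ip n (proj n Q R (act (u \<circ> w) (nu n r (parw n P Q (u \<circ> w)) (parw n P R w)))) T
          \<le> - (1 / (2 * real n)) * dT n T"
    using setting.part3[OF loc] by blast
  have c0: "1 / (2 * real n) > 0" using assms(1) by simp
  show ?thesis using P1 P2 c0 P3 by blast
qed

end
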